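(* For all positive integers $n,m$, every closed knight tour on the $n\times m$ board is bi-sited.
   Context: The $n\times m$ board is $\{1,\dots,n\}\times\{1,\dots,m\}$; a knight moves from $(x,y)$ to $(x',y')$ iff $\{|x-x'|,|y-y'|\}=\{1,2\}$. A closed knight tour is a Hamiltonian cycle in the resulting graph. A pair of edges $((a_1,b_1),(a_2,b_2))$ and $((c_1,d_1),(c_2,d_2))$ of a tour is a \emph{site} if $(|a_1-c_1|,|b_1-d_1|)=(|a_2-c_2|,|b_2-d_2|)\in\{(0,2),(2,0)\}$ or $(|a_1-c_2|,|b_1-d_2|)=(|a_2-c_1|,|b_2-d_1|)\in\{(0,2),(2,0)\}$. A tour is \emph{bi-sited} if it contains two sites with disjoint support, i.e. such that the endpoints of the four edges involved are pairwise distinct. *)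

theory Defs
  imports Main
begin

type_synonym square = "int \<times> int"

definition board :: "nat \<Rightarrow> nat \<Rightarrow> square set" where
  "board n m = {1..int n} \<times> {1..int m}"

definition knight_move :: "square \<Rightarrow> square \<Rightarrow> bool" where
  "knight_move s t = ({\<bar>fst s - fst t\<bar>, \<bar>snd s - snd t\<bar>} = {1, 2})"

definition closed_knight_tour :: "nat \<Rightarrow> nat \<Rightarrow> square list \<Rightarrow> bool" where
  "closed_knight_tour n m p \<longleftrightarrow>
     distinct p \<and> set p = board n m \<and> length p \<ge> 3 \<and>
     (\<forall>i < length p. knight_move (p ! i) (p ! ((i + 1) mod length p)))"

text \<open>The edges of the tour (each undirected edge given by one orientation).\<close>
definition tour_edges :: "square list \<Rightarrow> (square \<times> square) set" where
  "tour_edges p = {(p ! i, p ! ((i + 1) mod length p)) | i. i < length p}"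

definition two_step :: "int \<times> int \<Rightarrow> bool" where
  "two_step d \<longleftrightarrow> d = (0, 2) \<or> d = (2, 0)"

definition absdiff :: "square \<Rightarrow> square \<Rightarrow> int \<times> int" where
  "absdiff s t = (\<bar>fst s - fst t\<bar>, \<bar>snd s - snd t\<bar>)"

definition is_site :: "square \<times> square \<Rightarrow> square \<times> square \<Rightarrow> bool" where
  "is_site e f \<longleftrightarrow>
     (absdiff (fst e) (fst f) = absdiff (snd e) (snd f) \<and> two_step (absdiff (fst e) (fst f))) \<or>
     (absdiff (fst e) (snd f) = absdiff (snd e) (fst f) \<and> two_step (absdiff (fst e) (snd f)))"

definition bi_sited :: "square list \<Rightarrow> bool" where
  "bi_sited p \<longleftrightarrow>
     (\<exists>e1\<in>tour_edges p. \<exists>f1\<in>tour_edges p. \<exists>e2\<in>tour_edges p. \<exists>f2\<in>tour_edges p.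
        is_site e1 f1 \<and> is_site e2 f2 \<and>
        distinct [fst e1, snd e1, fst f1, snd f1, fst e2, snd e2, fst f2, snd f2])"

end

theory Submission
  imports Defs
begin


definition nbr :: "square list \<Rightarrow> square \<Rightarrow> square set" where
  "nbr p v = {u. (v,u) \<in> tour_edges p \<or> (u,v) \<in> tour_edges p}"

lemma knight_iff:
  "knight_move (x,y) u \<longleftrightarrow> u \<in> {(x+1,y+2),(x+1,y-2),(x-1,y+2),(x-1,y-2),(x+2,y+1),(x+2,y-1),(x-2,y+1),(x-2,y-1)}"
proof -
  obtain a b where u: "u = (a,b)" by (cases u)
  have "knight_move (x,y) u \<longleftrightarrow> (\<bar>x-a\<bar>=1 \<and> \<bar>y-b\<bar>=2) \<or> (\<bar>x-a\<bar>=2 \<and> \<bar>y-b\<bar>=1)"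
    unfolding knight_move_def u by (auto simp: doubleton_eq_iff)
  also have "\<dots> \<longleftrightarrow> u \<in> {(x+1,y+2),(x+1,y-2),(x-1,y+2),(x-1,y-2),(x+2,y+1),(x+2,y-1),(x-2,y+1),(x-2,y-1)}"
  proof -
    have e1: "\<bar>x-a\<bar>=1 \<longleftrightarrow> a=x-1 \<or> a=x+1" by arith
    have e2: "\<bar>x-a\<bar>=2 \<longleftrightarrow> a=x-2 \<or> a=x+2" by arith
    have e3: "\<bar>y-b\<bar>=1 \<longleftrightarrow> b=y-1 \<or> b=y+1" by arith
    have e4: "\<bar>y-b\<bar>=2 \<longleftrightarrow> b=y-2 \<or> b=y+2" by arith
    show ?thesis unfolding u e1 e2 e3 e4 by auto
  qed
  finally show ?thesis .
qed

lemma knight_sym: "knight_move u v \<Longrightarrow> knight_move v u"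
  unfolding knight_move_def by (simp add: abs_minus_commute)

lemma nbr_sym: "u \<in> nbr p v \<longleftrightarrow> v \<in> nbr p u"
  unfolding nbr_def by auto

context
  fixes n m :: nat and p :: "square list"
  assumes T: "closed_knight_tour n m p"
begin

lemma T_distinct: "distinct p" and T_set: "set p = board n m" and T_len: "length p \<ge> 3"
  and T_move: "\<And>i. i < length p \<Longrightarrow> knight_move (p ! i) (p ! ((i + 1) mod length p))"
  using T unfolding closed_knight_tour_def by auto

lemma nbr_kn: "u \<in> nbr p v \<Longrightarrow> knight_move v u \<and> u \<in> board n m \<and> v \<in> board n m"
proof -
  assume "u \<in> nbr p v"
  then obtain i where i: "i < length p" and
    "(v = p!i \<and> u = p!((i+1) mod length p)) \<or> (u = p!i \<and> v = p!((i+1) mod length p))"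
    unfolding nbr_def tour_edges_def by auto
  moreover have "(i+1) mod length p < length p" using T_len by (intro mod_less_divisor) linarith
  ultimately show ?thesis using T_move[OF i] T_set knight_sym
    by (metis nth_mem)
qed

lemma nbr_cand: "nbr p (x,y) \<subseteq> {(x+1,y+2),(x+1,y-2),(x-1,y+2),(x-1,y-2),(x+2,y+1),(x+2,y-1),(x-2,y+1),(x-2,y-1)} \<inter> board n m"
  using nbr_kn knight_iff by blast

lemma cand_sub:
  assumes "{(x+1,y+2),(x+1,y-2),(x-1,y+2),(x-1,y-2),(x+2,y+1),(x+2,y-1),(x-2,y+1),(x-2,y-1)} \<inter> board n m \<subseteq> C"
  shows "nbr p (x,y) \<subseteq> C"
  using nbr_cand assms by blast

lemma sucmod: "t < (L::nat) \<Longrightarrow> (t+1) mod L = (if t+1 = L then 0 else t+1)"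
  by (cases "t+1 = L") auto

lemma nbr_two:
  assumes v: "v \<in> board n m"
  shows "\<exists>a b. a \<noteq> b \<and> nbr p v = {a,b}"
proof -
  let ?L = "length p"
  have L3: "?L \<ge> 3" by (rule T_len)
  obtain i where i: "i < ?L" "v = p!i" using v T_set by (metis in_set_conv_nth)
  define j where "j = (if i = 0 then ?L - 1 else i - 1)"
  define k where "k = (if i + 1 = ?L then 0 else i + 1)"
  have jL: "j < ?L" and kL: "k < ?L" unfolding j_def k_def using i(1) L3 by auto
  have jk: "j \<noteq> k" unfolding j_def k_def using L3 i(1) by auto
  have j1: "(j+1) mod ?L = i" using sucmod[OF jL] unfolding j_def using L3 i(1) by auto
  have ik: "(i+1) mod ?L = k" using sucmod[OF i(1)] unfolding k_def by auto
  have dist: "distinct p" by (rule T_distinct)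
  have "nbr p v = {p!k, p!j}"
  proof (rule set_eqI, rule iffI)
    fix u assume u: "u \<in> nbr p v"
    have "(v,u) \<in> tour_edges p \<or> (u,v) \<in> tour_edges p" using u unfolding nbr_def by simp
    then consider t where "t < ?L" "v = p!t" "u = p!((t+1) mod ?L)"
      | t where "t < ?L" "u = p!t" "v = p!((t+1) mod ?L)"
      unfolding tour_edges_def by blast
    then show "u \<in> {p!k, p!j}"
    proof cases
      case (1 t)
      have "p!t = p!i" using 1 i by simp
      then have "t = i" using nth_eq_iff_index_eq[OF dist 1(1) i(1)] by blast
      then show ?thesis using 1 ik by simp
    next
      case (2 t)
      have tl: "(t+1) mod ?L < ?L" using sucmod[OF 2(1)] L3 2(1) by auto
      have "p!((t+1) mod ?L) = p!i" using 2 i by simp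
      then have ti: "(t+1) mod ?L = i" using nth_eq_iff_index_eq[OF dist tl i(1)] by blast
      have "t = j"
      proof (cases "t+1 = ?L")
        case True
        then have "i = 0" using sucmod[OF 2(1)] ti by simp
        then show ?thesis using True unfolding j_def by simp
      next
        case False
        then have "i = t+1" using sucmod[OF 2(1)] ti by simp
        then show ?thesis unfolding j_def by simp
      qed
      then show ?thesis using 2 by simp
    qed
  next
    fix u assume "u \<in> {p!k, p!j}"
    then consider "u = p!k" | "u = p!j" by blast
    then show "u \<in> nbr p v"
    proof cases
      case 1
      have "(p!i, p!((i+1) mod ?L)) \<in> tour_edges p" unfolding tour_edges_def using i(1) by blast
      then show ?thesis using 1 i ik unfolding nbr_def by simp
    next
      case 2
      have "(p!j, p!((j+1) mod ?L)) \<in> tour_edges p" unfolding tour_edges_def using jL by blast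
      then show ?thesis using 2 i j1 unfolding nbr_def by simp
    qed
  qed
  moreover have "p!k \<noteq> p!j" using nth_eq_iff_index_eq[OF dist kL jL] jk by simp
  ultimately show ?thesis by blast
qed

lemma nbr_full:
  assumes "v \<in> board n m" "a \<in> nbr p v" "b \<in> nbr p v" "a \<noteq> b"
  shows "nbr p v = {a,b}"
  using nbr_two[OF assms(1)] assms(2-4) by auto

lemma nbr_force:
  assumes "v \<in> board n m" "nbr p v \<subseteq> {a,b} \<union> X" "\<And>x. x \<in> X \<Longrightarrow> v \<notin> nbr p x"
  shows "nbr p v = {a,b}"
proof -
  obtain c d where cd: "c \<noteq> d" "nbr p v = {c,d}" using nbr_two[OF assms(1)] by blast
  have "c \<notin> X" "d \<notin> X" using assms(3) nbr_sym cd by blast+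
  then have "c \<in> {a,b}" "d \<in> {a,b}" using assms(2) cd by auto
  then show ?thesis using cd by auto
qed

lemma nbr_force0:
  assumes "v \<in> board n m" "nbr p v \<subseteq> {a} \<union> X" "\<And>x. x \<in> X \<Longrightarrow> v \<notin> nbr p x"
  shows False
proof -
  obtain c d where cd: "c \<noteq> d" "nbr p v = {c,d}" using nbr_two[OF assms(1)] by blast
  have "c \<notin> X" "d \<notin> X" using assms(3) nbr_sym cd by blast+
  then have "c \<in> {a}" "d \<in> {a}" using assms(2) cd by auto
  then show False using cd by auto
qed

lemma closure:
  assumes x: "x \<in> S" "x \<in> board n m" and cl: "\<And>v. v \<in> S \<Longrightarrow> nbr p v \<subseteq> S"
  shows "board n m \<subseteq> S"
proof -
  let ?L = "length p"
  have L0: "0 < ?L" using T_len by linarith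
  obtain i where i: "i < ?L" "x = p!i" using x T_set by (metis in_set_conv_nth)
  have step: "p!((i+k) mod ?L) \<in> S" for k
  proof (induction k)
    case 0 then show ?case using i x by simp
  next
    case (Suc k)
    define r where "r = (i+k) mod ?L"
    have rL: "r < ?L" unfolding r_def using L0 by simp
    have "(p!r, p!((r+1) mod ?L)) \<in> tour_edges p" unfolding tour_edges_def using rL by blast
    then have "p!((r+1) mod ?L) \<in> nbr p (p!r)" unfolding nbr_def by simp
    moreover have "(r + 1) mod ?L = (i + Suc k) mod ?L" unfolding r_def by (simp add: mod_Suc_eq)
    ultimately have m: "p!((i + Suc k) mod ?L) \<in> nbr p (p!r)" by simp
    have "p!r \<in> S" using Suc.IH unfolding r_def .
    then show ?case using cl m by blast
  qed
  show ?thesis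
  proof
    fix y assume "y \<in> board n m"
    then obtain j where j: "j < ?L" "y = p!j" using T_set by (metis in_set_conv_nth)
    have e: "i + (j + ?L - i) = j + ?L" using i by simp
    have "(i + (j + ?L - i)) mod ?L = j" unfolding e using j by simp
    then show "y \<in> S" using step[of "j + ?L - i"] j by simp
  qed
qed
end

definition site_in :: "square list \<Rightarrow> square set \<Rightarrow> bool" where
  "site_in p R \<longleftrightarrow> (\<exists>a1 a2 c1 c2. a2 \<in> nbr p a1 \<and> c2 \<in> nbr p c1 \<and>
     absdiff a1 c1 = absdiff a2 c2 \<and> two_step (absdiff a1 c1) \<and> distinct [a1,a2,c1,c2] \<and>
     {a1,a2,c1,c2} \<subseteq> R)"

lemma absdiff_sym: "absdiff a b = absdiff b a"
  unfolding absdiff_def by (simp add: abs_minus_commute)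

lemma pair_site:
  assumes "a2 \<in> nbr p a1" "c2 \<in> nbr p c1" "absdiff a1 c1 = absdiff a2 c2" "two_step (absdiff a1 c1)"
  shows "\<exists>e f. e \<in> tour_edges p \<and> f \<in> tour_edges p \<and> is_site e f \<and>
     (e = (a1,a2) \<or> e = (a2,a1)) \<and> (f = (c1,c2) \<or> f = (c2,c1))"
proof -
  have A: "(a1,a2) \<in> tour_edges p \<or> (a2,a1) \<in> tour_edges p" using assms(1) unfolding nbr_def by simp
  have C: "(c1,c2) \<in> tour_edges p \<or> (c2,c1) \<in> tour_edges p" using assms(2) unfolding nbr_def by simp
  have s1: "is_site (a1,a2) (c1,c2)" using assms(3,4) unfolding is_site_def by simp
  have s2: "is_site (a1,a2) (c2,c1)" using assms(3,4) unfolding is_site_def by simp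
  have s3: "is_site (a2,a1) (c1,c2)" using assms(3,4) unfolding is_site_def by simp
  have s4: "is_site (a2,a1) (c2,c1)" using assms(3,4) unfolding is_site_def by simp
  show ?thesis using A C s1 s2 s3 s4 by blast
qed

lemma pair_set: "e = (a1,a2) \<or> e = (a2,a1) \<Longrightarrow> {fst e, snd e} = {a1,a2}"
  by auto

lemma bisited_from:
  assumes "site_in p R1" "site_in p R2" "R1 \<inter> R2 = {}"
  shows "bi_sited p"
proof -
  obtain a1 a2 c1 c2 where A: "a2 \<in> nbr p a1" "c2 \<in> nbr p c1"
     "absdiff a1 c1 = absdiff a2 c2" "two_step (absdiff a1 c1)" "distinct [a1,a2,c1,c2]"
     "{a1,a2,c1,c2} \<subseteq> R1" using assms(1) unfolding site_in_def by blast
  obtain b1 b2 d1 d2 where B: "b2 \<in> nbr p b1" "d2 \<in> nbr p d1"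
     "absdiff b1 d1 = absdiff b2 d2" "two_step (absdiff b1 d1)" "distinct [b1,b2,d1,d2]"
     "{b1,b2,d1,d2} \<subseteq> R2" using assms(2) unfolding site_in_def by blast
  obtain e1 f1 where E1: "e1 \<in> tour_edges p" "f1 \<in> tour_edges p" "is_site e1 f1"
    "e1 = (a1,a2) \<or> e1 = (a2,a1)" "f1 = (c1,c2) \<or> f1 = (c2,c1)"
    using pair_site[OF A(1-4)] by blast
  obtain e2 f2 where E2: "e2 \<in> tour_edges p" "f2 \<in> tour_edges p" "is_site e2 f2"
    "e2 = (b1,b2) \<or> e2 = (b2,b1)" "f2 = (d1,d2) \<or> f2 = (d2,d1)"
    using pair_site[OF B(1-4)] by blast
  have D1: "{a1,a2,c1,c2} \<inter> {b1,b2,d1,d2} = {}" using A(6) B(6) assms(3) by blast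
  have "distinct [a1,a2,c1,c2,b1,b2,d1,d2]" using A(5) B(5) D1 by (simp, blast)
  then have cd: "card (set [a1,a2,c1,c2,b1,b2,d1,d2]) = 8" by (subst distinct_card) simp_all
  have "set [fst e1, snd e1, fst f1, snd f1, fst e2, snd e2, fst f2, snd f2] =
        {fst e1, snd e1} \<union> {fst f1, snd f1} \<union> {fst e2, snd e2} \<union> {fst f2, snd f2}" by auto
  also have "\<dots> = {a1,a2} \<union> {c1,c2} \<union> {b1,b2} \<union> {d1,d2}"
    using pair_set[OF E1(4)] pair_set[OF E1(5)] pair_set[OF E2(4)] pair_set[OF E2(5)] by simp
  also have "\<dots> = set [a1,a2,c1,c2,b1,b2,d1,d2]" by auto
  finally have "card (set [fst e1, snd e1, fst f1, snd f1, fst e2, snd e2, fst f2, snd f2]) =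
      length [fst e1, snd e1, fst f1, snd f1, fst e2, snd e2, fst f2, snd f2]" using cd by simp
  then have "distinct [fst e1, snd e1, fst f1, snd f1, fst e2, snd e2, fst f2, snd f2]"
    by (rule card_distinct)
  then show ?thesis unfolding bi_sited_def using E1 E2 by blast
qed


lemma no_tour_3_3:
  assumes T: "closed_knight_tour 3 3 p"
  shows False
proof -
  have f1: "nbr p (1,1) = {(2,3),(3,2)}"
    by (rule nbr_force[OF T, of _ _ _ "{}"]) (simp add: board_def, rule cand_sub[OF T], simp add: board_def, auto simp: )
  have f2: "nbr p (1,2) = {(3,3),(3,1)}"
    by (rule nbr_force[OF T, of _ _ _ "{}"]) (simp add: board_def, rule cand_sub[OF T], simp add: board_def, auto simp: )
  have f3: "nbr p (1,3) = {(2,1),(3,2)}"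
    by (rule nbr_force[OF T, of _ _ _ "{}"]) (simp add: board_def, rule cand_sub[OF T], simp add: board_def, auto simp: )
  have f4: "nbr p (2,1) = {(3,3),(1,3)}"
    by (rule nbr_force[OF T, of _ _ _ "{}"]) (simp add: board_def, rule cand_sub[OF T], simp add: board_def, auto simp: )
  show False
    by (rule nbr_force0[OF T, of "(2,2)" "(0,0)" "{}"]) (simp add: board_def, rule cand_sub[OF T], simp add: board_def, auto simp: )
qed

lemma no_tour_3_4:
  assumes T: "closed_knight_tour 3 4 p"
  shows False
proof -
  have f1: "nbr p (1,1) = {(2,3),(3,2)}"
    by (rule nbr_force[OF T, of _ _ _ "{}"]) (simp add: board_def, rule cand_sub[OF T], simp add: board_def, auto simp: )
  have f2: "nbr p (1,4) = {(2,2),(3,3)}"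
    by (rule nbr_force[OF T, of _ _ _ "{}"]) (simp add: board_def, rule cand_sub[OF T], simp add: board_def, auto simp: )
  have f3: "nbr p (2,1) = {(3,3),(1,3)}"
    by (rule nbr_force[OF T, of _ _ _ "{}"]) (simp add: board_def, rule cand_sub[OF T], simp add: board_def, auto simp: )
  have f4: "nbr p (2,2) = {(3,4),(1,4)}"
    by (rule nbr_force[OF T, of _ _ _ "{}"]) (simp add: board_def, rule cand_sub[OF T], simp add: board_def, auto simp: )
  have f5: "nbr p (2,3) = {(3,1),(1,1)}"
    by (rule nbr_force[OF T, of _ _ _ "{}"]) (simp add: board_def, rule cand_sub[OF T], simp add: board_def, auto simp: )
  have f6: "nbr p (2,4) = {(3,2),(1,2)}"
    by (rule nbr_force[OF T, of _ _ _ "{}"]) (simp add: board_def, rule cand_sub[OF T], simp add: board_def, auto simp: )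
  have f7: "nbr p (3,1) = {(2,3),(1,2)}"
    by (rule nbr_force[OF T, of _ _ _ "{}"]) (simp add: board_def, rule cand_sub[OF T], simp add: board_def, auto simp: )
  have f8: "nbr p (1,2) = {(2,4),(3,1)}"
    by (rule nbr_full[OF T]) (simp add: board_def, subst nbr_sym, simp add: f6, subst nbr_sym, simp add: f7, simp)
  have f9: "nbr p (3,2) = {(1,1),(2,4)}"
    by (rule nbr_full[OF T]) (simp add: board_def, subst nbr_sym, simp add: f1, subst nbr_sym, simp add: f6, simp)
  have "board 3 4 \<subseteq> {(1,1),(1,2),(2,3),(2,4),(3,1),(3,2)}"
    by (rule closure[OF T, of "(1,1)"]) (simp, simp add: board_def, (elim insertE emptyE; simp add: f1 f8 f5 f6 f7 f9))
  moreover have "(1,3) \<in> board 3 4" by (simp add: board_def)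
  ultimately have "((1,3)::square) \<in> {(1,1),(1,2),(2,3),(2,4),(3,1),(3,2)}" by blast
  then show False by simp
qed

lemma no_tour_3_5:
  assumes T: "closed_knight_tour 3 5 p"
  shows False
proof -
  have f1: "nbr p (1,1) = {(2,3),(3,2)}"
    by (rule nbr_force[OF T, of _ _ _ "{}"]) (simp add: board_def, rule cand_sub[OF T], simp add: board_def, auto simp: )
  have f2: "nbr p (1,5) = {(2,3),(3,4)}"
    by (rule nbr_force[OF T, of _ _ _ "{}"]) (simp add: board_def, rule cand_sub[OF T], simp add: board_def, auto simp: )
  have f3: "nbr p (2,1) = {(3,3),(1,3)}"
    by (rule nbr_force[OF T, of _ _ _ "{}"]) (simp add: board_def, rule cand_sub[OF T], simp add: board_def, auto simp: )
  have f4: "nbr p (2,2) = {(3,4),(1,4)}"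
    by (rule nbr_force[OF T, of _ _ _ "{}"]) (simp add: board_def, rule cand_sub[OF T], simp add: board_def, auto simp: )
  have f5: "nbr p (2,3) = {(1,1),(1,5)}"
    by (rule nbr_full[OF T]) (simp add: board_def, subst nbr_sym, simp add: f1, subst nbr_sym, simp add: f2, simp)
  have f6: "nbr p (2,4) = {(3,2),(1,2)}"
    by (rule nbr_force[OF T, of _ _ _ "{}"]) (simp add: board_def, rule cand_sub[OF T], simp add: board_def, auto simp: )
  have f7: "nbr p (2,5) = {(3,3),(1,3)}"
    by (rule nbr_force[OF T, of _ _ _ "{}"]) (simp add: board_def, rule cand_sub[OF T], simp add: board_def, auto simp: )
  have f8: "nbr p (1,3) = {(2,1),(2,5)}"
    by (rule nbr_full[OF T]) (simp add: board_def, subst nbr_sym, simp add: f3, subst nbr_sym, simp add: f7, simp)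
  show False
    by (rule nbr_force0[OF T, of "(3,1)" "(1,2)" "{(2,3)}"]) (simp add: board_def, rule cand_sub[OF T], simp add: board_def, auto simp: f5)
qed

lemma no_tour_4_3:
  assumes T: "closed_knight_tour 4 3 p"
  shows False
proof -
  have f1: "nbr p (1,1) = {(2,3),(3,2)}"
    by (rule nbr_force[OF T, of _ _ _ "{}"]) (simp add: board_def, rule cand_sub[OF T], simp add: board_def, auto simp: )
  have f2: "nbr p (1,2) = {(3,3),(3,1)}"
    by (rule nbr_force[OF T, of _ _ _ "{}"]) (simp add: board_def, rule cand_sub[OF T], simp add: board_def, auto simp: )
  have f3: "nbr p (1,3) = {(2,1),(3,2)}"
    by (rule nbr_force[OF T, of _ _ _ "{}"]) (simp add: board_def, rule cand_sub[OF T], simp add: board_def, auto simp: )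
  have f4: "nbr p (2,2) = {(4,3),(4,1)}"
    by (rule nbr_force[OF T, of _ _ _ "{}"]) (simp add: board_def, rule cand_sub[OF T], simp add: board_def, auto simp: )
  have f5: "nbr p (3,2) = {(1,1),(1,3)}"
    by (rule nbr_full[OF T]) (simp add: board_def, subst nbr_sym, simp add: f1, subst nbr_sym, simp add: f3, simp)
  have f6: "nbr p (4,1) = {(3,3),(2,2)}"
    by (rule nbr_force[OF T, of _ _ _ "{}"]) (simp add: board_def, rule cand_sub[OF T], simp add: board_def, auto simp: )
  have f7: "nbr p (3,3) = {(1,2),(4,1)}"
    by (rule nbr_full[OF T]) (simp add: board_def, subst nbr_sym, simp add: f2, subst nbr_sym, simp add: f6, simp)
  have f8: "nbr p (2,1) = {(4,2),(1,3)}"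
    by (rule nbr_force[OF T, of _ _ _ "{(3,3)}"]) (simp add: board_def, rule cand_sub[OF T], simp add: board_def, auto simp: f7)
  have f9: "nbr p (4,2) = {(2,3),(2,1)}"
    by (rule nbr_force[OF T, of _ _ _ "{}"]) (simp add: board_def, rule cand_sub[OF T], simp add: board_def, auto simp: )
  have f10: "nbr p (2,3) = {(1,1),(4,2)}"
    by (rule nbr_full[OF T]) (simp add: board_def, subst nbr_sym, simp add: f1, subst nbr_sym, simp add: f9, simp)
  have "board 4 3 \<subseteq> {(1,1),(1,3),(2,1),(2,3),(3,2),(4,2)}"
    by (rule closure[OF T, of "(1,1)"]) (simp, simp add: board_def, (elim insertE emptyE; simp add: f1 f3 f8 f10 f5 f9))
  moreover have "(1,2) \<in> board 4 3" by (simp add: board_def)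
  ultimately have "((1,2)::square) \<in> {(1,1),(1,3),(2,1),(2,3),(3,2),(4,2)}" by blast
  then show False by simp
qed

lemma no_tour_4_4:
  assumes T: "closed_knight_tour 4 4 p"
  shows False
proof -
  have f1: "nbr p (1,1) = {(2,3),(3,2)}"
    by (rule nbr_force[OF T, of _ _ _ "{}"]) (simp add: board_def, rule cand_sub[OF T], simp add: board_def, auto simp: )
  have f2: "nbr p (1,4) = {(2,2),(3,3)}"
    by (rule nbr_force[OF T, of _ _ _ "{}"]) (simp add: board_def, rule cand_sub[OF T], simp add: board_def, auto simp: )
  have f3: "nbr p (4,1) = {(3,3),(2,2)}"
    by (rule nbr_force[OF T, of _ _ _ "{}"]) (simp add: board_def, rule cand_sub[OF T], simp add: board_def, auto simp: )
  have f4: "nbr p (2,2) = {(1,4),(4,1)}"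
    by (rule nbr_full[OF T]) (simp add: board_def, subst nbr_sym, simp add: f2, subst nbr_sym, simp add: f3, simp)
  have f5: "nbr p (3,3) = {(1,4),(4,1)}"
    by (rule nbr_full[OF T]) (simp add: board_def, subst nbr_sym, simp add: f2, subst nbr_sym, simp add: f3, simp)
  have "board 4 4 \<subseteq> {(1,4),(2,2),(3,3),(4,1)}"
    by (rule closure[OF T, of "(1,4)"]) (simp, simp add: board_def, (elim insertE emptyE; simp add: f2 f4 f5 f3))
  moreover have "(1,1) \<in> board 4 4" by (simp add: board_def)
  ultimately have "((1,1)::square) \<in> {(1,4),(2,2),(3,3),(4,1)}" by blast
  then show False by simp
qed

lemma no_tour_4_5:
  assumes T: "closed_knight_tour 4 5 p"
  shows False
proof -
  have f1: "nbr p (1,1) = {(2,3),(3,2)}"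
    by (rule nbr_force[OF T, of _ _ _ "{}"]) (simp add: board_def, rule cand_sub[OF T], simp add: board_def, auto simp: )
  have f2: "nbr p (1,5) = {(2,3),(3,4)}"
    by (rule nbr_force[OF T, of _ _ _ "{}"]) (simp add: board_def, rule cand_sub[OF T], simp add: board_def, auto simp: )
  have f3: "nbr p (2,3) = {(1,1),(1,5)}"
    by (rule nbr_full[OF T]) (simp add: board_def, subst nbr_sym, simp add: f1, subst nbr_sym, simp add: f2, simp)
  have f4: "nbr p (3,1) = {(4,3),(1,2)}"
    by (rule nbr_force[OF T, of _ _ _ "{(2,3)}"]) (simp add: board_def, rule cand_sub[OF T], simp add: board_def, auto simp: f3)
  have f5: "nbr p (3,5) = {(4,3),(1,4)}"
    by (rule nbr_force[OF T, of _ _ _ "{(2,3)}"]) (simp add: board_def, rule cand_sub[OF T], simp add: board_def, auto simp: f3)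
  have f6: "nbr p (4,1) = {(3,3),(2,2)}"
    by (rule nbr_force[OF T, of _ _ _ "{}"]) (simp add: board_def, rule cand_sub[OF T], simp add: board_def, auto simp: )
  have f7: "nbr p (4,2) = {(3,4),(2,1)}"
    by (rule nbr_force[OF T, of _ _ _ "{(2,3)}"]) (simp add: board_def, rule cand_sub[OF T], simp add: board_def, auto simp: f3)
  have f8: "nbr p (3,4) = {(1,5),(4,2)}"
    by (rule nbr_full[OF T]) (simp add: board_def, subst nbr_sym, simp add: f2, subst nbr_sym, simp add: f7, simp)
  have f9: "nbr p (4,3) = {(3,1),(3,5)}"
    by (rule nbr_full[OF T]) (simp add: board_def, subst nbr_sym, simp add: f4, subst nbr_sym, simp add: f5, simp)
  have f10: "nbr p (2,2) = {(1,4),(4,1)}"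
    by (rule nbr_force[OF T, of _ _ _ "{(3,4),(4,3)}"]) (simp add: board_def, rule cand_sub[OF T], simp add: board_def, auto simp: f8 f9)
  have f11: "nbr p (1,4) = {(3,5),(2,2)}"
    by (rule nbr_full[OF T]) (simp add: board_def, subst nbr_sym, simp add: f5, subst nbr_sym, simp add: f10, simp)
  have f12: "nbr p (4,4) = {(2,5),(3,2)}"
    by (rule nbr_force[OF T, of _ _ _ "{(2,3)}"]) (simp add: board_def, rule cand_sub[OF T], simp add: board_def, auto simp: f3)
  have f13: "nbr p (3,2) = {(1,1),(4,4)}"
    by (rule nbr_full[OF T]) (simp add: board_def, subst nbr_sym, simp add: f1, subst nbr_sym, simp add: f12, simp)
  have f14: "nbr p (1,3) = {(2,5),(2,1)}"
    by (rule nbr_force[OF T, of _ _ _ "{(3,4),(3,2)}"]) (simp add: board_def, rule cand_sub[OF T], simp add: board_def, auto simp: f8 f13)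
  have f15: "nbr p (2,1) = {(4,2),(1,3)}"
    by (rule nbr_full[OF T]) (simp add: board_def, subst nbr_sym, simp add: f7, subst nbr_sym, simp add: f14, simp)
  have f16: "nbr p (2,4) = {(4,5),(1,2)}"
    by (rule nbr_force[OF T, of _ _ _ "{(3,2),(4,3)}"]) (simp add: board_def, rule cand_sub[OF T], simp add: board_def, auto simp: f13 f9)
  have f17: "nbr p (1,2) = {(3,1),(2,4)}"
    by (rule nbr_full[OF T]) (simp add: board_def, subst nbr_sym, simp add: f4, subst nbr_sym, simp add: f16, simp)
  have f18: "nbr p (2,5) = {(4,4),(1,3)}"
    by (rule nbr_full[OF T]) (simp add: board_def, subst nbr_sym, simp add: f12, subst nbr_sym, simp add: f14, simp)
  have "board 4 5 \<subseteq> {(1,1),(1,3),(1,5),(2,1),(2,3),(2,5),(3,2),(3,4),(4,2),(4,4)}"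
    by (rule closure[OF T, of "(1,1)"]) (simp, simp add: board_def, (elim insertE emptyE; simp add: f1 f14 f2 f15 f3 f18 f13 f8 f7 f12))
  moreover have "(1,2) \<in> board 4 5" by (simp add: board_def)
  ultimately have "((1,2)::square) \<in> {(1,1),(1,3),(1,5),(2,1),(2,3),(2,5),(3,2),(3,4),(4,2),(4,4)}" by blast
  then show False by simp
qed

lemma no_tour_5_3:
  assumes T: "closed_knight_tour 5 3 p"
  shows False
proof -
  have f1: "nbr p (1,1) = {(2,3),(3,2)}"
    by (rule nbr_force[OF T, of _ _ _ "{}"]) (simp add: board_def, rule cand_sub[OF T], simp add: board_def, auto simp: )
  have f2: "nbr p (1,2) = {(3,3),(3,1)}"
    by (rule nbr_force[OF T, of _ _ _ "{}"]) (simp add: board_def, rule cand_sub[OF T], simp add: board_def, auto simp: )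
  have f3: "nbr p (1,3) = {(2,1),(3,2)}"
    by (rule nbr_force[OF T, of _ _ _ "{}"]) (simp add: board_def, rule cand_sub[OF T], simp add: board_def, auto simp: )
  have f4: "nbr p (2,2) = {(4,3),(4,1)}"
    by (rule nbr_force[OF T, of _ _ _ "{}"]) (simp add: board_def, rule cand_sub[OF T], simp add: board_def, auto simp: )
  have f5: "nbr p (3,2) = {(1,1),(1,3)}"
    by (rule nbr_full[OF T]) (simp add: board_def, subst nbr_sym, simp add: f1, subst nbr_sym, simp add: f3, simp)
  have f6: "nbr p (4,2) = {(2,3),(2,1)}"
    by (rule nbr_force[OF T, of _ _ _ "{}"]) (simp add: board_def, rule cand_sub[OF T], simp add: board_def, auto simp: )
  have f7: "nbr p (2,1) = {(1,3),(4,2)}"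
    by (rule nbr_full[OF T]) (simp add: board_def, subst nbr_sym, simp add: f3, subst nbr_sym, simp add: f6, simp)
  have f8: "nbr p (2,3) = {(1,1),(4,2)}"
    by (rule nbr_full[OF T]) (simp add: board_def, subst nbr_sym, simp add: f1, subst nbr_sym, simp add: f6, simp)
  have "board 5 3 \<subseteq> {(1,1),(1,3),(2,1),(2,3),(3,2),(4,2)}"
    by (rule closure[OF T, of "(1,1)"]) (simp, simp add: board_def, (elim insertE emptyE; simp add: f1 f3 f7 f8 f5 f6))
  moreover have "(1,2) \<in> board 5 3" by (simp add: board_def)
  ultimately have "((1,2)::square) \<in> {(1,1),(1,3),(2,1),(2,3),(3,2),(4,2)}" by blast
  then show False by simp
qed

lemma no_tour_5_4:
  assumes T: "closed_knight_tour 5 4 p"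
  shows False
proof -
  have f1: "nbr p (1,1) = {(2,3),(3,2)}"
    by (rule nbr_force[OF T, of _ _ _ "{}"]) (simp add: board_def, rule cand_sub[OF T], simp add: board_def, auto simp: )
  have f2: "nbr p (1,4) = {(2,2),(3,3)}"
    by (rule nbr_force[OF T, of _ _ _ "{}"]) (simp add: board_def, rule cand_sub[OF T], simp add: board_def, auto simp: )
  have f3: "nbr p (5,1) = {(4,3),(3,2)}"
    by (rule nbr_force[OF T, of _ _ _ "{}"]) (simp add: board_def, rule cand_sub[OF T], simp add: board_def, auto simp: )
  have f4: "nbr p (3,2) = {(1,1),(5,1)}"
    by (rule nbr_full[OF T]) (simp add: board_def, subst nbr_sym, simp add: f1, subst nbr_sym, simp add: f3, simp)
  have f5: "nbr p (1,3) = {(3,4),(2,1)}"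
    by (rule nbr_force[OF T, of _ _ _ "{(3,2)}"]) (simp add: board_def, rule cand_sub[OF T], simp add: board_def, auto simp: f4)
  have f6: "nbr p (2,4) = {(4,3),(1,2)}"
    by (rule nbr_force[OF T, of _ _ _ "{(3,2)}"]) (simp add: board_def, rule cand_sub[OF T], simp add: board_def, auto simp: f4)
  have f7: "nbr p (4,3) = {(5,1),(2,4)}"
    by (rule nbr_full[OF T]) (simp add: board_def, subst nbr_sym, simp add: f3, subst nbr_sym, simp add: f6, simp)
  have f8: "nbr p (4,4) = {(5,2),(2,3)}"
    by (rule nbr_force[OF T, of _ _ _ "{(3,2)}"]) (simp add: board_def, rule cand_sub[OF T], simp add: board_def, auto simp: f4)
  have f9: "nbr p (2,3) = {(1,1),(4,4)}"
    by (rule nbr_full[OF T]) (simp add: board_def, subst nbr_sym, simp add: f1, subst nbr_sym, simp add: f8, simp)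
  have f10: "nbr p (3,1) = {(5,2),(1,2)}"
    by (rule nbr_force[OF T, of _ _ _ "{(4,3),(2,3)}"]) (simp add: board_def, rule cand_sub[OF T], simp add: board_def, auto simp: f7 f9)
  have f11: "nbr p (1,2) = {(2,4),(3,1)}"
    by (rule nbr_full[OF T]) (simp add: board_def, subst nbr_sym, simp add: f6, subst nbr_sym, simp add: f10, simp)
  have f12: "nbr p (5,2) = {(4,4),(3,1)}"
    by (rule nbr_full[OF T]) (simp add: board_def, subst nbr_sym, simp add: f8, subst nbr_sym, simp add: f10, simp)
  have "board 5 4 \<subseteq> {(1,1),(1,2),(2,3),(2,4),(3,1),(3,2),(4,3),(4,4),(5,1),(5,2)}"
    by (rule closure[OF T, of "(1,1)"]) (simp, simp add: board_def, (elim insertE emptyE; simp add: f1 f11 f9 f6 f10 f4 f7 f8 f3 f12))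
  moreover have "(1,3) \<in> board 5 4" by (simp add: board_def)
  ultimately have "((1,3)::square) \<in> {(1,1),(1,2),(2,3),(2,4),(3,1),(3,2),(4,3),(4,4),(5,1),(5,2)}" by blast
  then show False by simp
qed

lemma no_tour_5_5:
  assumes T: "closed_knight_tour 5 5 p"
  shows False
proof -
  have f1: "nbr p (1,1) = {(2,3),(3,2)}"
    by (rule nbr_force[OF T, of _ _ _ "{}"]) (simp add: board_def, rule cand_sub[OF T], simp add: board_def, auto simp: )
  have f2: "nbr p (1,5) = {(2,3),(3,4)}"
    by (rule nbr_force[OF T, of _ _ _ "{}"]) (simp add: board_def, rule cand_sub[OF T], simp add: board_def, auto simp: )
  have f3: "nbr p (2,3) = {(1,1),(1,5)}"
    by (rule nbr_full[OF T]) (simp add: board_def, subst nbr_sym, simp add: f1, subst nbr_sym, simp add: f2, simp)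
  have f4: "nbr p (5,1) = {(4,3),(3,2)}"
    by (rule nbr_force[OF T, of _ _ _ "{}"]) (simp add: board_def, rule cand_sub[OF T], simp add: board_def, auto simp: )
  have f5: "nbr p (3,2) = {(1,1),(5,1)}"
    by (rule nbr_full[OF T]) (simp add: board_def, subst nbr_sym, simp add: f1, subst nbr_sym, simp add: f4, simp)
  have f6: "nbr p (4,4) = {(2,5),(5,2)}"
    by (rule nbr_force[OF T, of _ _ _ "{(3,2),(2,3)}"]) (simp add: board_def, rule cand_sub[OF T], simp add: board_def, auto simp: f5 f3)
  have f7: "nbr p (5,5) = {(4,3),(3,4)}"
    by (rule nbr_force[OF T, of _ _ _ "{}"]) (simp add: board_def, rule cand_sub[OF T], simp add: board_def, auto simp: )
  have f8: "nbr p (3,4) = {(1,5),(5,5)}"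
    by (rule nbr_full[OF T]) (simp add: board_def, subst nbr_sym, simp add: f2, subst nbr_sym, simp add: f7, simp)
  have f9: "nbr p (1,3) = {(2,5),(2,1)}"
    by (rule nbr_force[OF T, of _ _ _ "{(3,4),(3,2)}"]) (simp add: board_def, rule cand_sub[OF T], simp add: board_def, auto simp: f8 f5)
  have f10: "nbr p (2,5) = {(4,4),(1,3)}"
    by (rule nbr_full[OF T]) (simp add: board_def, subst nbr_sym, simp add: f6, subst nbr_sym, simp add: f9, simp)
  have f11: "nbr p (4,2) = {(5,4),(2,1)}"
    by (rule nbr_force[OF T, of _ _ _ "{(3,4),(2,3)}"]) (simp add: board_def, rule cand_sub[OF T], simp add: board_def, auto simp: f8 f3)
  have f12: "nbr p (2,1) = {(1,3),(4,2)}"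
    by (rule nbr_full[OF T]) (simp add: board_def, subst nbr_sym, simp add: f9, subst nbr_sym, simp add: f11, simp)
  have f13: "nbr p (4,3) = {(5,1),(5,5)}"
    by (rule nbr_full[OF T]) (simp add: board_def, subst nbr_sym, simp add: f4, subst nbr_sym, simp add: f7, simp)
  have "board 5 5 \<subseteq> {(1,1),(1,5),(2,3),(3,2),(3,4),(4,3),(5,1),(5,5)}"
    by (rule closure[OF T, of "(1,1)"]) (simp, simp add: board_def, (elim insertE emptyE; simp add: f1 f2 f3 f5 f8 f13 f4 f7))
  moreover have "(1,2) \<in> board 5 5" by (simp add: board_def)
  ultimately have "((1,2)::square) \<in> {(1,1),(1,5),(2,3),(3,2),(3,4),(4,3),(5,1),(5,5)}" by blast
  then show False by simp
qed



lemma corner_gen: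
  assumes T: "closed_knight_tour n m p"
    and A: "A \<in> board n m" and B: "B \<in> board n m"
    and nA: "nbr p A \<subseteq> {X1,X2}" and nB: "nbr p B \<subseteq> {Y1,X2,Y3,Y4}"
  shows "(X1 \<in> nbr p A \<and> Y1 \<in> nbr p B) \<or> (X2 \<in> nbr p A \<and> Y3 \<in> nbr p B) \<or> (X1 \<in> nbr p A \<and> Y4 \<in> nbr p B)"
proof -
  obtain a b where ab: "a \<noteq> b" "nbr p A = {a,b}" using nbr_two[OF T A] by blast
  then have x: "X1 \<in> nbr p A" "X2 \<in> nbr p A" using nA by auto
  obtain c d where cd: "c \<noteq> d" "nbr p B = {c,d}" using nbr_two[OF T B] by blast
  have "Y1 \<in> nbr p B \<or> Y3 \<in> nbr p B \<or> Y4 \<in> nbr p B" using cd nB by auto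
  then show ?thesis using x by blast
qed

lemma site_inI:
  assumes "a2 \<in> nbr p a1" "c2 \<in> nbr p c1" "absdiff a1 c1 = absdiff a2 c2" "two_step (absdiff a1 c1)"
    "distinct [a1,a2,c1,c2]" "{a1,a2,c1,c2} \<subseteq> R"
  shows "site_in p R"
  unfolding site_in_def using assms by blast

lemma corner_site:
  assumes T: "closed_knight_tour n m p"
    and A: "A \<in> board n m" and B: "B \<in> board n m"
    and nA: "nbr p A \<subseteq> {X1,X2}" and nB: "nbr p B \<subseteq> {Y1,X2,Y3,Y4}"
    and s1: "absdiff A B = absdiff X1 Y1 \<and> two_step (absdiff A B) \<and> distinct [A,X1,B,Y1] \<and> {A,X1,B,Y1} \<subseteq> R"
    and s2: "absdiff A B = absdiff X2 Y3 \<and> two_step (absdiff A B) \<and> distinct [A,X2,B,Y3] \<and> {A,X2,B,Y3} \<subseteq> R"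
    and s3: "absdiff A B = absdiff X1 Y4 \<and> two_step (absdiff A B) \<and> distinct [A,X1,B,Y4] \<and> {A,X1,B,Y4} \<subseteq> R"
  shows "site_in p R"
  using corner_gen[OF T A B nA nB] site_inI[of _ p _ _ _ R] s1 s2 s3 by meson

lemma corner_a:
  assumes T: "closed_knight_tour n m p" and n: "3 \<le> n" and m: "3 \<le> m"
  shows "site_in p {q. fst q \<le> 3}"
proof (rule corner_site[OF T, of "(1,1)" "(1,3)" "(2,3)" "(3,2)" "(2,1)" "(3,4)" "(2,5)"])
  show "nbr p (1,1) \<subseteq> {(2,3),(3,2)}" by (rule cand_sub[OF T]) (auto simp: board_def)
  show "nbr p (1,3) \<subseteq> {(2,1),(3,2),(3,4),(2,5)}" by (rule cand_sub[OF T]) (auto simp: board_def)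
qed (use n m in \<open>auto simp: board_def absdiff_def two_step_def\<close>)

lemma corner_b:
  assumes T: "closed_knight_tour n m p" and n: "3 \<le> n" and m: "3 \<le> m"
  shows "site_in p {q. int n - 2 \<le> fst q}"
proof (rule corner_site[OF T, of "(int n,1)" "(int n,3)" "(int n - 1,3)" "(int n - 2,2)" "(int n - 1,1)" "(int n - 2,4)" "(int n - 1,5)"])
  show "nbr p (int n,1) \<subseteq> {(int n - 1,3),(int n - 2,2)}" by (rule cand_sub[OF T]) (auto simp: board_def)
  show "nbr p (int n,3) \<subseteq> {(int n - 1,1),(int n - 2,2),(int n - 2,4),(int n - 1,5)}" by (rule cand_sub[OF T]) (auto simp: board_def)
qed (use n m in \<open>auto simp: board_def absdiff_def two_step_def\<close>)

lemma corner_c: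
  assumes T: "closed_knight_tour n m p" and n: "3 \<le> n" and m: "3 \<le> m"
  shows "site_in p {q. snd q \<le> 3}"
proof (rule corner_site[OF T, of "(1,1)" "(3,1)" "(3,2)" "(2,3)" "(1,2)" "(4,3)" "(5,2)"])
  show "nbr p (1,1) \<subseteq> {(3,2),(2,3)}" by (rule cand_sub[OF T]) (auto simp: board_def)
  show "nbr p (3,1) \<subseteq> {(1,2),(2,3),(4,3),(5,2)}" by (rule cand_sub[OF T]) (auto simp: board_def)
qed (use n m in \<open>auto simp: board_def absdiff_def two_step_def\<close>)

lemma corner_d:
  assumes T: "closed_knight_tour n m p" and n: "3 \<le> n" and m: "3 \<le> m"
  shows "site_in p {q. int m - 2 \<le> snd q}"
proof (rule corner_site[OF T, of "(1,int m)" "(3,int m)" "(3,int m - 1)" "(2,int m - 2)" "(1,int m - 1)" "(4,int m - 2)" "(5,int m - 1)"])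
  show "nbr p (1,int m) \<subseteq> {(3,int m - 1),(2,int m - 2)}" by (rule cand_sub[OF T]) (auto simp: board_def)
  show "nbr p (3,int m) \<subseteq> {(1,int m - 1),(2,int m - 2),(4,int m - 2),(5,int m - 1)}" by (rule cand_sub[OF T]) (auto simp: board_def)
qed (use n m in \<open>auto simp: board_def absdiff_def two_step_def\<close>)

lemma dims:
  assumes T: "closed_knight_tour n m p" and "n > 0" "m > 0"
  shows "3 \<le> n \<and> 3 \<le> m"
proof (rule ccontr)
  assume "\<not> (3 \<le> n \<and> 3 \<le> m)"
  then consider "n \<le> 2" | "m \<le> 2" by linarith
  then show False
  proof cases
    case 1
    show False
    proof (rule nbr_force0[OF T, of "(1,1)" "(2,3)" "{}"])
      show "(1,1) \<in> board n m" using assms by (simp add: board_def)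
      show "nbr p (1,1) \<subseteq> {(2,3)} \<union> {}" by (rule cand_sub[OF T]) (use 1 in \<open>auto simp: board_def\<close>)
    qed simp
  next
    case 2
    show False
    proof (rule nbr_force0[OF T, of "(1,1)" "(3,2)" "{}"])
      show "(1,1) \<in> board n m" using assms by (simp add: board_def)
      show "nbr p (1,1) \<subseteq> {(3,2)} \<union> {}" by (rule cand_sub[OF T]) (use 2 in \<open>auto simp: board_def\<close>)
    qed simp
  qed
qed


theorem proposition4p2:
  fixes n m :: nat and p :: "square list"
  assumes "n > 0" and "m > 0"
    and "closed_knight_tour n m p"
  shows "bi_sited p"
proof -
  note T = assms(3)
  have nm: "3 \<le> n" "3 \<le> m" using dims[OF T assms(1,2)] by auto
  show ?thesis
  proof (cases "6 \<le> n")
    case True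
    have "{q::square. fst q \<le> 3} \<inter> {q. int n - 2 \<le> fst q} = {}" using True by auto
    then show ?thesis using bisited_from[OF corner_a[OF T nm] corner_b[OF T nm]] by blast
  next
    case n6: False
    show ?thesis
    proof (cases "6 \<le> m")
      case True
      have "{q::square. snd q \<le> 3} \<inter> {q. int m - 2 \<le> snd q} = {}" using True by auto
      then show ?thesis using bisited_from[OF corner_c[OF T nm] corner_d[OF T nm]] by blast
    next
      case False
      have n': "n = 3 \<or> n = 4 \<or> n = 5" using n6 nm by linarith
      have m': "m = 3 \<or> m = 4 \<or> m = 5" using False nm by linarith
      from n' m' T have False
        using no_tour_3_3 no_tour_3_4 no_tour_3_5 no_tour_4_3 no_tour_4_4 no_tour_4_5
          no_tour_5_3 no_tour_5_4 no_tour_5_5 by (elim disjE) simp_all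
      then show ?thesis ..
    qed
  qed
qed

end
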